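(* Let $\varepsilon\in(0,1]$, $0<\mu<1$, $s,\lambda\geq0$, and let $\zeta\in\mathbb{A}^{s+1}_\lambda$ be real-valued with $36K_s^2\varepsilon|\zeta|_{1,\lambda}\leq1$. Let $F(x)=\frac{1}{(1+x^2)^{3/2}}-1$ and $F_{\varepsilon\sqrt\mu}(\partial_x\zeta):=F(\varepsilon\sqrt\mu\,\partial_x\zeta)$. Then $$|F_{\varepsilon\sqrt\mu}(\partial_x\zeta)|_{s,\lambda}\leq\varepsilon\mu|\zeta|_{s+1,\lambda}.$$
   Context: $\mathbb{T}=\mathbb{R}/2\pi\mathbb{Z}$. For $f\in L^1(\mathbb{T})$, $\widehat f(n)=\frac{1}{2\pi}\int_{\mathbb{T}}f e^{-inx}dx$; $|f|_{s,\lambda}:=\sum_{n}(1+|n|)^se^{\lambda|n|}|\widehat f(n)|$ and $\mathbb{A}^s_\lambda$ is the set of $f$ with finite norm. $K_s=1$ for $0<s\leq1$ and $K_s=2^{s-1}$ for $s=0$ or $s>1$. *)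

theory Defs
  imports "HOL-Analysis.Analysis"
begin

text \<open>Functions on the torus R/2piZ are represented by functions real => complex,
  only their values on [0, 2pi] matter.\<close>

definition fourier_coeff :: "(real \<Rightarrow> complex) \<Rightarrow> int \<Rightarrow> complex" where
  "fourier_coeff f n =
     integral {0..2*pi} (\<lambda>x. f x * exp (- (\<i> * of_int n * of_real x))) / of_real (2*pi)"

definition wiener_norm :: "real \<Rightarrow> real \<Rightarrow> (real \<Rightarrow> complex) \<Rightarrow> real" where
  "wiener_norm s lam f =
     (\<Sum>\<^sub>\<infinity> n\<in>(UNIV::int set). (1 + \<bar>real_of_int n\<bar>) powr s * exp (lam * \<bar>real_of_int n\<bar>) * norm (fourier_coeff f n))"

definition in_wiener :: "real \<Rightarrow> real \<Rightarrow> (real \<Rightarrow> complex) \<Rightarrow> bool" where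
  "in_wiener s lam f \<longleftrightarrow> f absolutely_integrable_on {0..2*pi} \<and>
     (\<lambda>n::int. (1 + \<bar>real_of_int n\<bar>) powr s * exp (lam * \<bar>real_of_int n\<bar>) * norm (fourier_coeff f n))
       summable_on UNIV"

definition fourier_deriv :: "(real \<Rightarrow> complex) \<Rightarrow> real \<Rightarrow> complex" where
  "fourier_deriv f x = (\<Sum>\<^sub>\<infinity> n\<in>(UNIV::int set). \<i> * of_int n * fourier_coeff f n * exp (\<i> * of_int n * of_real x))"

definition K_const :: "real \<Rightarrow> real" where
  "K_const s = (if 0 < s \<and> s \<le> 1 then 1 else 2 powr (s - 1))"

definition F_fun :: "real \<Rightarrow> real" where
  "F_fun x = 1 / (1 + x^2) powr (3/2) - 1"

end

theory Submission imports Defs begin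


lemma prod_has_sum_real:
  fixes f g :: "'x \<Rightarrow> real"
  assumes f0: "\<And>m. f m \<ge> 0" and g0: "\<And>k. g k \<ge> 0"
    and fs: "f summable_on UNIV" and gs: "g summable_on UNIV"
  shows "(\<lambda>(m,k). f m * g k) summable_on UNIV"
    and "infsum (\<lambda>(m,k). f m * g k) UNIV = infsum f UNIV * infsum g UNIV"
proof -
  have h1: "((\<lambda>k. f m * g k) has_sum f m * infsum g UNIV) UNIV" for m
    using has_sum_cmult_right[OF has_sum_infsum[OF gs]] by simp
  have h2: "(\<lambda>m. f m * infsum g UNIV) summable_on UNIV"
    using fs by (rule summable_on_cmult_left)
  have S: "(\<lambda>p. f (fst p) * g (snd p)) summable_on Sigma UNIV (\<lambda>_. UNIV)"
    by (rule summable_on_SigmaI[where g="\<lambda>m. f m * infsum g UNIV"]) (use h1 h2 f0 g0 in auto)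
  then show S': "(\<lambda>(m,k). f m * g k) summable_on UNIV"
    by (simp add: case_prod_unfold)
  have "infsum (\<lambda>(m,k). f m * g k) UNIV = infsum (\<lambda>m. infsum (\<lambda>k. f m * g k) UNIV) UNIV"
    using infsum_Sigma'_banach[of "\<lambda>m k. f m * g k" UNIV "\<lambda>_. UNIV"] S' by simp
  also have "\<dots> = infsum (\<lambda>m. f m * infsum g UNIV) UNIV"
    by (simp add: infsum_cmult_right')
  also have "\<dots> = infsum f UNIV * infsum g UNIV"
    by (simp add: infsum_cmult_left')
  finally show "infsum (\<lambda>(m,k). f m * g k) UNIV = infsum f UNIV * infsum g UNIV" .
qed

definition conv :: "(int \<Rightarrow> 'a) \<Rightarrow> (int \<Rightarrow> 'a) \<Rightarrow> int \<Rightarrow> 'a::{banach,real_normed_field}" where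
  "conv f g n = (\<Sum>\<^sub>\<infinity>m. f m * g (n - m))"

lemma conv_main:
  fixes f g :: "int \<Rightarrow> 'a::{banach,real_normed_field}"
  assumes fs: "(\<lambda>n. norm (f n)) summable_on UNIV" and gs: "(\<lambda>n. norm (g n)) summable_on UNIV"
  shows "\<And>n. (\<lambda>m. norm (f m * g (n - m))) summable_on UNIV"
    and "(\<lambda>n. norm (conv f g n)) summable_on UNIV"
    and "conv f g summable_on UNIV"
    and "infsum (conv f g) UNIV = infsum f UNIV * infsum g UNIV"
proof -
  define H where "H = (\<lambda>(m,k). f m * g k)"
  have Hn: "(\<lambda>p. norm (H p)) summable_on UNIV"
    using prod_has_sum_real(1)[OF _ _ fs gs] by (simp add: H_def norm_mult case_prod_unfold)
  have Hs: "H summable_on UNIV" using Hn abs_summable_summable by blast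
  define \<phi> where "\<phi> = (\<lambda>(n::int,m::int). (m, n - m))"
  have bij: "bij_betw \<phi> UNIV UNIV"
    by (rule bij_betwI[where g="\<lambda>(m,k). (m+k, m)"]) (auto simp: \<phi>_def)
  have HP: "(\<lambda>p. norm (H (\<phi> p))) summable_on UNIV"
    using summable_on_reindex_bij_betw[OF bij, of "\<lambda>p. norm (H p)"] Hn by simp
  have HPe: "\<And>p. H (\<phi> p) = (\<lambda>(n,m). f m * g (n - m)) p"
    by (auto simp: H_def \<phi>_def)
  have HPn: "(\<lambda>p. norm ((\<lambda>(n,m). f m * g (n - m)) p)) summable_on Sigma UNIV (\<lambda>_. UNIV)"
    using HP by (simp only: HPe UNIV_Times_UNIV)
  note SI = Infinite_Sum.abs_summable_on_Sigma_iff[THEN iffD1, OF HPn]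
  show inner: "\<And>n. (\<lambda>m. norm (f m * g (n - m))) summable_on UNIV"
    using SI[THEN conjunct1] by simp
  have "(\<lambda>n. infsum (\<lambda>m. norm (f m * g (n - m))) UNIV) summable_on UNIV"
    using SI[THEN conjunct2] by (simp add: infsum_nonneg)
  then show cn: "(\<lambda>n. norm (conv f g n)) summable_on UNIV"
    by (rule Infinite_Sum.abs_summable_on_comparison_test') (use inner in \<open>auto simp: conv_def intro!: norm_infsum_bound\<close>)
  then show "conv f g summable_on UNIV" using abs_summable_summable by blast
  have HPs: "(\<lambda>(n,m). f m * g (n - m)) summable_on UNIV"
    using HPn abs_summable_summable by (simp add: case_prod_unfold)
  have "infsum (conv f g) UNIV = infsum (\<lambda>(n,m). f m * g (n - m)) UNIV"
    unfolding conv_def using infsum_Sigma'_banach[of "\<lambda>n m. f m * g (n - m)" UNIV "\<lambda>_. UNIV"] HPs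
    by simp
  also have "\<dots> = infsum H UNIV"
    using infsum_reindex_bij_betw[OF bij, of H] by (simp add: HPe del: split_paired_all)
  also have "\<dots> = infsum (\<lambda>m. infsum (\<lambda>k. f m * g k) UNIV) UNIV"
    using infsum_Sigma'_banach[of "\<lambda>m k. f m * g k" UNIV "\<lambda>_. UNIV"] Hs by (simp add: H_def)
  also have "\<dots> = infsum (\<lambda>m. f m * infsum g UNIV) UNIV"
    by (simp add: infsum_cmult_right')
  also have "\<dots> = infsum f UNIV * infsum g UNIV"
    by (simp add: infsum_cmult_left')
  finally show "infsum (conv f g) UNIV = infsum f UNIV * infsum g UNIV" .
qed



definition W :: "real \<Rightarrow> real \<Rightarrow> int \<Rightarrow> real" where
  "W s lam n = (1 + \<bar>real_of_int n\<bar>) powr s * exp (lam * \<bar>real_of_int n\<bar>)"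

definition N :: "real \<Rightarrow> real \<Rightarrow> (int \<Rightarrow> complex) \<Rightarrow> real" where
  "N s lam a = (\<Sum>\<^sub>\<infinity>n. W s lam n * norm (a n))"

lemma wiener_norm_eq: "wiener_norm s lam f = N s lam (fourier_coeff f)"
  by (simp add: wiener_norm_def N_def W_def)

lemma in_wiener_eq: "in_wiener s lam f \<longleftrightarrow> f absolutely_integrable_on {0..2*pi} \<and>
   (\<lambda>n. W s lam n * norm (fourier_coeff f n)) summable_on UNIV"
  by (simp add: in_wiener_def W_def)

lemma W_pos: "W s lam n > 0"
  by (simp add: W_def)

lemma W_ge1: assumes "s \<ge> 0" "lam \<ge> 0" shows "W s lam n \<ge> 1"
proof -
  have "(1 + \<bar>real_of_int n\<bar>) powr s \<ge> 1" using assms by (simp add: ge_one_powr_ge_zero)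
  moreover have "exp (lam * \<bar>real_of_int n\<bar>) \<ge> 1" using assms by simp
  ultimately have "1 * 1 \<le> (1 + \<bar>real_of_int n\<bar>) powr s * exp (lam * \<bar>real_of_int n\<bar>)"
    by (intro mult_mono) auto
  then show ?thesis unfolding W_def by simp
qed

lemma W_minus: "W s lam (- n) = W s lam n"
  by (simp add: W_def)

lemma W0: "W 0 lam n = exp (lam * \<bar>real_of_int n\<bar>)"
  by (simp add: W_def)

lemma W0_split: assumes "lam \<ge> 0" shows "W 0 lam n \<le> W 0 lam m * W 0 lam (n - m)"
proof -
  have "\<bar>real_of_int n\<bar> \<le> \<bar>real_of_int m\<bar> + \<bar>real_of_int (n - m)\<bar>" by linarith
  then have "lam * \<bar>real_of_int n\<bar> \<le> lam * \<bar>real_of_int m\<bar> + lam * \<bar>real_of_int (n - m)\<bar>"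
    using assms by (simp add: mult_left_mono flip: distrib_left)
  then show ?thesis by (simp add: W0 flip: exp_add)
qed

lemma powr_split: fixes p q r s :: real
  assumes "0 < r" "r \<le> p + q" "0 < p" "0 < q" "0 \<le> s"
  shows "r powr s \<le> 2 powr s * (p powr s + q powr s)"
proof -
  have "r powr s \<le> (2 * max p q) powr s"
    using assms by (intro powr_mono2) auto
  also have "\<dots> = 2 powr s * max p q powr s" using assms by (simp add: powr_mult)
  also have "max p q powr s \<le> p powr s + q powr s"
  proof (cases "p \<le> q")
    case True
    then show ?thesis using powr_ge_zero[of p s] by (simp add: max_def)
  next
    case False
    then show ?thesis using powr_ge_zero[of q s] by (simp add: max_def)
  qed
  then have "2 powr s * max p q powr s \<le> 2 powr s * (p powr s + q powr s)" by simp
  finally show ?thesis .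
qed

lemma W_split: assumes "s \<ge> 0" "lam \<ge> 0"
  shows "W s lam n \<le> 2 powr s * W s lam m * W 0 lam (n - m) + 2 powr s * W 0 lam m * W s lam (n - m)"
proof -
  define p where "p = 1 + \<bar>real_of_int m\<bar>"
  define q where "q = 1 + \<bar>real_of_int (n - m)\<bar>"
  define r where "r = 1 + \<bar>real_of_int n\<bar>"
  have r: "r powr s \<le> 2 powr s * (p powr s + q powr s)"
    by (rule powr_split) (auto simp: p_def q_def r_def assms)
  have e: "W 0 lam n \<le> W 0 lam m * W 0 lam (n - m)" using W0_split assms by blast
  have "W s lam n = r powr s * W 0 lam n" by (simp add: W_def r_def)
  also have "\<dots> \<le> (2 powr s * (p powr s + q powr s)) * (W 0 lam m * W 0 lam (n - m))"
    by (intro mult_mono r e) (auto simp: W_pos less_imp_le)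
  also have "\<dots> = 2 powr s * (p powr s * W 0 lam m) * W 0 lam (n - m) + 2 powr s * W 0 lam m * (q powr s * W 0 lam (n - m))"
    by (simp add: algebra_simps)
  also have "\<dots> = 2 powr s * W s lam m * W 0 lam (n - m) + 2 powr s * W 0 lam m * W s lam (n - m)"
    unfolding W_def p_def q_def by (simp add: add_pos_nonneg[THEN less_imp_neq, symmetric])
  finally show ?thesis .
qed

lemma conv_weighted:
  fixes a b :: "int \<Rightarrow> complex" and w ua va ub vb :: "int \<Rightarrow> real"
  assumes nn: "\<And>n. ua n \<ge> 0" "\<And>n. va n \<ge> 0" "\<And>n. ub n \<ge> 0" "\<And>n. vb n \<ge> 0" "\<And>n. w n \<ge> 0"
    and split: "\<And>n m. w n \<le> ua m * va (n - m) + ub m * vb (n - m)"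
    and sa: "(\<lambda>n. norm (a n)) summable_on UNIV" and sb: "(\<lambda>n. norm (b n)) summable_on UNIV"
    and s1a: "(\<lambda>n. ua n * norm (a n)) summable_on UNIV" and s1b: "(\<lambda>n. va n * norm (b n)) summable_on UNIV"
    and s2a: "(\<lambda>n. ub n * norm (a n)) summable_on UNIV" and s2b: "(\<lambda>n. vb n * norm (b n)) summable_on UNIV"
  shows "(\<lambda>n. w n * norm (conv a b n)) summable_on UNIV"
    and "(\<Sum>\<^sub>\<infinity>n. w n * norm (conv a b n)) \<le>
          (\<Sum>\<^sub>\<infinity>n. ua n * norm (a n)) * (\<Sum>\<^sub>\<infinity>n. va n * norm (b n)) +
          (\<Sum>\<^sub>\<infinity>n. ub n * norm (a n)) * (\<Sum>\<^sub>\<infinity>n. vb n * norm (b n))"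
proof -
  define A1 where "A1 = (\<lambda>n. ua n * norm (a n))"
  define B1 where "B1 = (\<lambda>n. va n * norm (b n))"
  define A2 where "A2 = (\<lambda>n. ub n * norm (a n))"
  define B2 where "B2 = (\<lambda>n. vb n * norm (b n))"
  have nA1: "(\<lambda>n. norm (A1 n)) summable_on UNIV" using s1a nn by (simp add: A1_def abs_mult)
  have nB1: "(\<lambda>n. norm (B1 n)) summable_on UNIV" using s1b nn by (simp add: B1_def abs_mult)
  have nA2: "(\<lambda>n. norm (A2 n)) summable_on UNIV" using s2a nn by (simp add: A2_def abs_mult)
  have nB2: "(\<lambda>n. norm (B2 n)) summable_on UNIV" using s2b nn by (simp add: B2_def abs_mult)
  note C1 = conv_main[OF nA1 nB1] and C2 = conv_main[OF nA2 nB2] and C = conv_main[OF sa sb]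
  have i1: "(\<lambda>m. A1 m * B1 (n - m)) summable_on UNIV" for n
    by (rule Infinite_Sum.abs_summable_summable[OF C1(1)[of n]])
  have i2: "(\<lambda>m. A2 m * B2 (n - m)) summable_on UNIV" for n
    by (rule Infinite_Sum.abs_summable_summable[OF C2(1)[of n]])
  have pt: "w n * norm (conv a b n) \<le> conv A1 B1 n + conv A2 B2 n" for n
  proof -
    have "norm (conv a b n) \<le> (\<Sum>\<^sub>\<infinity>m. norm (a m * b (n - m)))"
      unfolding conv_def by (rule norm_infsum_bound) (use C(1) in blast)
    then have "w n * norm (conv a b n) \<le> w n * (\<Sum>\<^sub>\<infinity>m. norm (a m * b (n - m)))"
      using nn by (simp add: mult_left_mono)
    also have "\<dots> = (\<Sum>\<^sub>\<infinity>m. w n * norm (a m * b (n - m)))"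
      by (simp add: infsum_cmult_right')
    also have "\<dots> \<le> (\<Sum>\<^sub>\<infinity>m. A1 m * B1 (n - m) + A2 m * B2 (n - m))"
    proof (rule infsum_mono)
      show "(\<lambda>m. w n * norm (a m * b (n - m))) summable_on UNIV"
        using C(1)[of n] by (rule summable_on_cmult_right)
      show "(\<lambda>m. A1 m * B1 (n - m) + A2 m * B2 (n - m)) summable_on UNIV"
        using i1 i2 by (rule summable_on_add)
      fix m
      have "w n * norm (a m * b (n - m)) \<le> (ua m * va (n - m) + ub m * vb (n - m)) * (norm (a m) * norm (b (n - m)))"
        unfolding norm_mult by (rule mult_right_mono[OF split]) simp
      then show "w n * norm (a m * b (n - m)) \<le> A1 m * B1 (n - m) + A2 m * B2 (n - m)"
        by (simp add: A1_def B1_def A2_def B2_def algebra_simps)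
    qed
    also have "\<dots> = conv A1 B1 n + conv A2 B2 n"
      unfolding conv_def by (rule infsum_add[OF i1 i2])
    finally show ?thesis .
  qed
  have ssum: "(\<lambda>n. conv A1 B1 n + conv A2 B2 n) summable_on UNIV"
    using C1(3) C2(3) by (rule summable_on_add)
  show S: "(\<lambda>n. w n * norm (conv a b n)) summable_on UNIV"
    by (rule summable_on_comparison_test[OF ssum pt]) (use nn in simp)
  have "(\<Sum>\<^sub>\<infinity>n. w n * norm (conv a b n)) \<le> (\<Sum>\<^sub>\<infinity>n. conv A1 B1 n + conv A2 B2 n)"
    by (rule infsum_mono[OF S ssum pt])
  also have "\<dots> = infsum (conv A1 B1) UNIV + infsum (conv A2 B2) UNIV"
    by (rule infsum_add[OF C1(3) C2(3)])
  also have "\<dots> = infsum A1 UNIV * infsum B1 UNIV + infsum A2 UNIV * infsum B2 UNIV"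
    using C1(4) C2(4) by simp
  finally show "(\<Sum>\<^sub>\<infinity>n. w n * norm (conv a b n)) \<le>
          (\<Sum>\<^sub>\<infinity>n. ua n * norm (a n)) * (\<Sum>\<^sub>\<infinity>n. va n * norm (b n)) +
          (\<Sum>\<^sub>\<infinity>n. ub n * norm (a n)) * (\<Sum>\<^sub>\<infinity>n. vb n * norm (b n))"
    by (simp add: A1_def B1_def A2_def B2_def)
qed



definition ts :: "(int \<Rightarrow> complex) \<Rightarrow> real \<Rightarrow> complex" where
  "ts e x = (\<Sum>\<^sub>\<infinity>n. e n * exp (\<i> * of_int n * of_real x))"

lemma norm_E [simp]: "norm (exp (\<i> * of_int n * of_real x)) = 1"
proof -
  have "\<i> * of_int n * of_real x = \<i> * of_real (of_int n * x)" by simp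
  then show ?thesis by (metis norm_exp_i_times)
qed

lemma E_add: "exp (\<i> * of_int m * of_real x) * exp (\<i> * of_int k * of_real x) = exp (\<i> * of_int (m + k) * of_real x)"
  by (simp add: distrib_left distrib_right flip: exp_add)

lemma ts_abs_summable:
  assumes "(\<lambda>n. norm (e n)) summable_on UNIV"
  shows "(\<lambda>n. norm (e n * exp (\<i> * of_int n * of_real x))) summable_on UNIV"
  using assms by (simp add: norm_mult)

lemma ts_has_sum:
  assumes "(\<lambda>n. norm (e n)) summable_on UNIV"
  shows "((\<lambda>n. e n * exp (\<i> * of_int n * of_real x)) has_sum ts e x) UNIV"
  unfolding ts_def
  by (rule has_sum_infsum, rule Infinite_Sum.abs_summable_summable[OF ts_abs_summable[OF assms]])

lemma ts_mult:
  assumes a: "(\<lambda>n. norm (a n)) summable_on UNIV" and b: "(\<lambda>n. norm (b n)) summable_on UNIV"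
  shows "ts a x * ts b x = ts (conv a b) x"
proof -
  define f where "f = (\<lambda>n. a n * exp (\<i> * of_int n * of_real x))"
  define g where "g = (\<lambda>n. b n * exp (\<i> * of_int n * of_real x))"
  have fs: "(\<lambda>n. norm (f n)) summable_on UNIV" using ts_abs_summable[OF a] by (simp add: f_def)
  have gs: "(\<lambda>n. norm (g n)) summable_on UNIV" using ts_abs_summable[OF b] by (simp add: g_def)
  have cv: "conv f g n = conv a b n * exp (\<i> * of_int n * of_real x)" for n
  proof -
    have "f m * g (n - m) = a m * b (n - m) * exp (\<i> * of_int n * of_real x)" for m
      using E_add[of m x "n - m"] by (simp add: f_def g_def mult_ac)
    then show ?thesis unfolding conv_def by (simp add: infsum_cmult_left')
  qed
  have "ts a x * ts b x = infsum f UNIV * infsum g UNIV" by (simp add: ts_def f_def g_def)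
  also have "\<dots> = infsum (conv f g) UNIV" using conv_main(4)[OF fs gs] by simp
  also have "\<dots> = ts (conv a b) x" unfolding ts_def cv ..
  finally show ?thesis .
qed

lemma ts_uniform:
  assumes "(\<lambda>n. norm (e n)) summable_on UNIV"
  shows "uniform_limit UNIV (\<lambda>X x. \<Sum>n\<in>X. e n * exp (\<i> * of_int n * of_real x)) (ts e) (finite_subsets_at_top UNIV)"
  unfolding ts_def
  by (rule Weierstrass_m_test_general[where M="\<lambda>n. norm (e n)"]) (use assms in \<open>auto simp: norm_mult\<close>)

lemma ts_cont:
  assumes "(\<lambda>n. norm (e n)) summable_on UNIV"
  shows "continuous_on UNIV (ts e)"
  by (rule uniform_limit_theorem[OF _ ts_uniform[OF assms]]) (auto intro!: always_eventually continuous_intros)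

lemma exp_int_integral:
  "((\<lambda>x. exp (\<i> * of_int k * of_real x)) has_integral (if k = 0 then of_real (2*pi) else 0)) {0..2*pi}"
proof (cases "k = 0")
  case True
  then show ?thesis using has_integral_const_real[of "1::complex" 0 "2*pi"]
    by (simp add: scaleR_conv_of_real)
next
  case False
  define F where "F = (\<lambda>z::complex. exp (\<i> * of_int k * z) / (\<i> * of_int k))"
  have d: "((\<lambda>x. F (of_real x)) has_vector_derivative exp (\<i> * of_int k * of_real x)) (at x within {0..2*pi})" for x
  proof (rule has_vector_derivative_real_field)
    show "(F has_field_derivative exp (\<i> * of_int k * of_real x)) (at (of_real x))"
      unfolding F_def using False by (auto intro!: derivative_eq_intros)
  qed
  have "((\<lambda>x. exp (\<i> * of_int k * of_real x)) has_integral (F (of_real (2*pi)) - F (of_real 0))) {0..2*pi}"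
    by (rule fundamental_theorem_of_calculus) (use d in auto)
  moreover have "exp (\<i> * of_int k * of_real (2*pi)) = 1"
    using exp_integer_2pi[of "of_int k"] by (simp add: mult_ac)
  ultimately show ?thesis using False by (simp add: F_def)
qed

lemma ts_coeff:
  assumes es: "(\<lambda>n. norm (e n)) summable_on UNIV"
    and g: "\<And>x. x \<in> {0..2*pi} \<Longrightarrow> g x = ts e x"
  shows "fourier_coeff g m = e m"
proof -
  define h where "h = (\<lambda>n x. e n * exp (\<i> * of_int n * of_real x) * exp (- (\<i> * of_int m * of_real x)))"
  have hE: "h n x = e n * exp (\<i> * of_int (n - m) * of_real x)" for n x
    unfolding h_def by (simp add: mult.assoc algebra_simps flip: exp_add)
  have ul: "uniform_limit {0..2*pi} (\<lambda>X x. \<Sum>n\<in>X. h n x) (\<lambda>x. ts e x * exp (- (\<i> * of_int m * of_real x))) (finite_subsets_at_top UNIV)"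
  proof (rule Weierstrass_m_test_general'[where M="\<lambda>n. norm (e n)"])
    show "norm (h n x) \<le> norm (e n)" for n x
      by (simp add: hE norm_mult)
    show "((\<lambda>n. h n x) has_sum ts e x * exp (- (\<i> * of_int m * of_real x))) UNIV" for x
      unfolding h_def by (rule has_sum_cmult_left[OF ts_has_sum[OF es]])
  qed (use es in auto)
  obtain I J where I: "\<And>X. ((\<lambda>x. \<Sum>n\<in>X. h n x) has_integral I X) {0..2*pi}"
    and J: "((\<lambda>x. ts e x * exp (- (\<i> * of_int m * of_real x))) has_integral J) {0..2*pi}"
    and lim: "(I \<longlongrightarrow> J) (finite_subsets_at_top UNIV)"
    by (rule uniform_limit_integral[OF ul]) (auto simp: h_def intro!: continuous_intros)
  have Ih: "((\<lambda>x. h n x) has_integral e n * (if n - m = 0 then of_real (2*pi) else 0)) {0..2*pi}" for n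
    unfolding hE by (rule has_integral_mult_right[OF exp_int_integral])
  have IX: "I X = (if m \<in> X then of_real (2*pi) * e m else 0)" if "finite X" "m \<in> X" for X
  proof -
    have "((\<lambda>x. \<Sum>n\<in>X. h n x) has_integral (\<Sum>n\<in>X. e n * (if n - m = 0 then of_real (2*pi) else 0))) {0..2*pi}"
      by (rule has_integral_sum[OF that(1)]) (rule Ih)
    moreover have "(\<Sum>n\<in>X. e n * (if n - m = 0 then of_real (2*pi) else 0)) = of_real (2*pi) * e m"
      using that by (simp add: if_distrib sum.delta' cong: if_cong)
    ultimately show ?thesis using I[of X] that by (auto dest: has_integral_unique)
  qed
  have ev: "eventually (\<lambda>X. I X = of_real (2*pi) * e m) (finite_subsets_at_top UNIV)"
    unfolding eventually_finite_subsets_at_top by (intro exI[of _ "{m}"]) (use IX in auto)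
  have "(I \<longlongrightarrow> of_real (2*pi) * e m) (finite_subsets_at_top UNIV)"
    by (rule tendsto_eventually[OF ev])
  then have Jv: "J = of_real (2*pi) * e m"
    using lim tendsto_unique by (metis finite_subsets_at_top_neq_bot)
  have "fourier_coeff g m = integral {0..2*pi} (\<lambda>x. ts e x * exp (- (\<i> * of_int m * of_real x))) / of_real (2*pi)"
    unfolding fourier_coeff_def by (metis (no_types, lifting) g integral_cong)
  also have "\<dots> = e m" using J Jv by (simp add: integral_unique)
  finally show ?thesis .
qed



lemma W_norm_summable:
  assumes "s \<ge> 0" "lam \<ge> 0" "(\<lambda>n. W s lam n * norm (a n)) summable_on UNIV"
  shows "(\<lambda>n. norm (a n)) summable_on UNIV"
proof (rule summable_on_comparison_test[OF assms(3)])
  fix n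
  show "norm (a n) \<le> W s lam n * norm (a n)"
    using W_ge1[OF assms(1,2), of n] by (simp add: mult_le_cancel_right1)
qed simp

lemma N_nonneg: "N s lam a \<ge> 0"
  unfolding N_def by (rule infsum_nonneg) (simp add: W_pos less_imp_le)

primrec pw :: "(int \<Rightarrow> complex) \<Rightarrow> nat \<Rightarrow> int \<Rightarrow> complex" where
  "pw a 0 = a"
| "pw a (Suc k) = conv a (pw a k)"

lemma pw_props:
  assumes s: "s \<ge> 0" and l: "lam \<ge> 0"
    and S0: "(\<lambda>n. W 0 lam n * norm (a n)) summable_on UNIV"
    and Ss: "(\<lambda>n. W s lam n * norm (a n)) summable_on UNIV"
  shows "(\<lambda>n. W 0 lam n * norm (pw a k n)) summable_on UNIV \<and> N 0 lam (pw a k) \<le> N 0 lam a ^ Suc k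
       \<and> (\<lambda>n. W s lam n * norm (pw a k n)) summable_on UNIV
       \<and> N s lam (pw a k) \<le> real (Suc k) * (2 powr s) ^ k * N 0 lam a ^ k * N s lam a
       \<and> (\<forall>x. ts (pw a k) x = ts a x ^ Suc k)"
proof (induction k)
  case 0
  then show ?case using S0 Ss by simp
next
  case (Suc k)
  define P where "P = pw a k"
  define K where "K = (2::real) powr s"
  have K1: "K \<ge> 1" using s by (simp add: K_def ge_one_powr_ge_zero)
  define A0 where "A0 = N 0 lam a"
  define As where "As = N s lam a"
  have A0n: "A0 \<ge> 0" and Asn: "As \<ge> 0" by (simp_all add: A0_def As_def N_nonneg)
  have P0: "(\<lambda>n. W 0 lam n * norm (P n)) summable_on UNIV" and P0b: "N 0 lam P \<le> A0 ^ Suc k"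
    and Ps: "(\<lambda>n. W s lam n * norm (P n)) summable_on UNIV"
    and Psb: "N s lam P \<le> real (Suc k) * K ^ k * A0 ^ k * As"
    and Pt: "\<And>x. ts P x = ts a x ^ Suc k"
    using Suc.IH by (simp_all add: P_def K_def A0_def As_def)
  have na: "(\<lambda>n. norm (a n)) summable_on UNIV" by (rule W_norm_summable[OF _ l S0]) simp
  have nP: "(\<lambda>n. norm (P n)) summable_on UNIV" by (rule W_norm_summable[OF _ l P0]) simp
  have Wn: "\<And>n. W r lam n \<ge> 0" for r by (simp add: W_pos less_imp_le)
  have c0: "(\<lambda>n. W 0 lam n * norm (conv a P n)) summable_on UNIV"
     "(\<Sum>\<^sub>\<infinity>n. W 0 lam n * norm (conv a P n)) \<le>
          (\<Sum>\<^sub>\<infinity>n. W 0 lam n * norm (a n)) * (\<Sum>\<^sub>\<infinity>n. W 0 lam n * norm (P n)) +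
          (\<Sum>\<^sub>\<infinity>n. 0 * norm (a n)) * (\<Sum>\<^sub>\<infinity>n. 0 * norm (P n))"
    by (rule conv_weighted[where ua="W 0 lam" and va="W 0 lam" and ub="\<lambda>_. 0" and vb="\<lambda>_. 0"];
        (simp add: Wn na nP S0 P0 W0_split[OF l])?)+
  have N0c: "N 0 lam (conv a P) \<le> A0 ^ Suc (Suc k)"
  proof -
    have "N 0 lam (conv a P) \<le> A0 * N 0 lam P" using c0(2) by (simp add: N_def A0_def)
    also have "\<dots> \<le> A0 * A0 ^ Suc k" by (rule mult_left_mono[OF P0b A0n])
    finally show ?thesis by simp
  qed
  have KS: "(\<lambda>n. K * W s lam n * norm (a n)) summable_on UNIV"
    using summable_on_cmult_right[OF Ss, of K] by (simp add: mult.assoc)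
  have K0: "(\<lambda>n. K * W 0 lam n * norm (a n)) summable_on UNIV"
    using summable_on_cmult_right[OF S0, of K] by (simp add: mult.assoc)
  have splitK: "W s lam n \<le> K * W s lam m * W 0 lam (n - m) + K * W 0 lam m * W s lam (n - m)" for n m
    using W_split[OF s l, of n m] by (simp add: K_def)
  have Kn: "K \<ge> 0" using K1 by simp
  have cs: "(\<lambda>n. W s lam n * norm (conv a P n)) summable_on UNIV"
     "(\<Sum>\<^sub>\<infinity>n. W s lam n * norm (conv a P n)) \<le>
          (\<Sum>\<^sub>\<infinity>n. K * W s lam n * norm (a n)) * (\<Sum>\<^sub>\<infinity>n. W 0 lam n * norm (P n)) +
          (\<Sum>\<^sub>\<infinity>n. K * W 0 lam n * norm (a n)) * (\<Sum>\<^sub>\<infinity>n. W s lam n * norm (P n))"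
    by (rule conv_weighted[where ua="\<lambda>n. K * W s lam n" and va="W 0 lam" and ub="\<lambda>n. K * W 0 lam n" and vb="W s lam"];
        (simp add: Wn Kn na nP KS K0 P0 Ps splitK)?)+
  have e1: "(\<Sum>\<^sub>\<infinity>n. K * W s lam n * norm (a n)) = K * As"
    unfolding As_def N_def by (simp add: mult.assoc infsum_cmult_right')
  have e2: "(\<Sum>\<^sub>\<infinity>n. K * W 0 lam n * norm (a n)) = K * A0"
    unfolding A0_def N_def by (simp add: mult.assoc infsum_cmult_right')
  have Nsc: "N s lam (conv a P) \<le> real (Suc (Suc k)) * K ^ Suc k * A0 ^ Suc k * As"
  proof -
    have "N s lam (conv a P) \<le> K * As * N 0 lam P + K * A0 * N s lam P"
      using cs(2) by (simp add: N_def e1 e2)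
    also have "\<dots> \<le> K * As * A0 ^ Suc k + K * A0 * (real (Suc k) * K ^ k * A0 ^ k * As)"
      using K1 A0n Asn by (intro add_mono mult_left_mono P0b Psb) auto
    also have "\<dots> = (K + real (Suc k) * K ^ Suc k) * A0 ^ Suc k * As"
      by (simp add: algebra_simps)
    also have "\<dots> \<le> (K ^ Suc k + real (Suc k) * K ^ Suc k) * A0 ^ Suc k * As"
    proof -
      have "K \<le> K ^ Suc k" using K1 by (metis power_increasing power_one_right Suc_eq_plus1 le_add2)
      then show ?thesis using A0n Asn by (intro mult_right_mono) auto
    qed
    also have "\<dots> = real (Suc (Suc k)) * K ^ Suc k * A0 ^ Suc k * As"
      by (simp add: algebra_simps)
    finally show ?thesis .
  qed
  have tsc: "ts (conv a P) x = ts a x ^ Suc (Suc k)" for x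
    using ts_mult[OF na nP, of x] Pt[of x] by simp
  show ?case
    using c0(1) N0c cs(1) Nsc tsc by (simp add: P_def K_def A0_def As_def)
qed



lemma W_ge_W0: assumes "s \<ge> 0" shows "W 0 lam n \<le> W s lam n"
proof -
  have "(1 + \<bar>real_of_int n\<bar>) powr s \<ge> 1" using assms by (simp add: ge_one_powr_ge_zero)
  then show ?thesis unfolding W_def by (simp add: mult_le_cancel_right1)
qed

lemma comp_series:
  fixes q :: "nat \<Rightarrow> complex" and p :: "nat \<Rightarrow> nat"
  assumes s: "s \<ge> 0" and l: "lam \<ge> 0"
    and S0: "(\<lambda>n. W 0 lam n * norm (a n)) summable_on UNIV"
    and Ss: "(\<lambda>n. W s lam n * norm (a n)) summable_on UNIV"
    and qs: "(\<lambda>j. norm (q j) * N s lam (pw a (p j))) summable_on UNIV"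
  defines "e \<equiv> (\<lambda>n. \<Sum>\<^sub>\<infinity>j. q j * pw a (p j) n)"
  shows "(\<lambda>n. W s lam n * norm (e n)) summable_on UNIV"
    and "N s lam e \<le> (\<Sum>\<^sub>\<infinity>j. norm (q j) * N s lam (pw a (p j)))"
    and "\<And>x. ts e x = (\<Sum>\<^sub>\<infinity>j. q j * ts a x ^ Suc (p j))"
proof -
  note PP = pw_props[OF s l S0 Ss]
  define D where "D = (\<lambda>j n. norm (q j) * (W s lam n * norm (pw a (p j) n)))"
  have Dn: "D j n \<ge> 0" for j n by (simp add: D_def W_pos less_imp_le)
  have Dj: "((\<lambda>n. D j n) has_sum norm (q j) * N s lam (pw a (p j))) UNIV" for j
    unfolding D_def N_def by (rule has_sum_cmult_right, rule has_sum_infsum) (use PP in blast)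
  have DS: "(\<lambda>(j,n). D j n) summable_on UNIV \<times> UNIV"
    using summable_on_SigmaI[where f="\<lambda>(j,n). D j n" and A=UNIV and B="\<lambda>_. UNIV", OF _ qs] Dj Dn
    by (simp add: case_prod_unfold)
  have DS': "(\<lambda>(n,j). D j n) summable_on UNIV \<times> UNIV"
    using DS summable_on_swap[of "\<lambda>(j,n). D j n" "UNIV::nat set" "UNIV::int set"] by (simp add: case_prod_unfold)
  have Dinner: "(\<lambda>j. D j n) summable_on UNIV" for n
    using summable_on_SigmaD1[of "\<lambda>n j. D j n" UNIV "\<lambda>_. UNIV", OF _ UNIV_I] DS' by simp
  define h where "h = (\<lambda>n. \<Sum>\<^sub>\<infinity>j. D j n)"
  have hs: "h summable_on UNIV"
    unfolding h_def using summable_on_Sigma_banach[of "\<lambda>n j. D j n" UNIV "\<lambda>_. UNIV"] DS' by simp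
  have hsum: "infsum h UNIV = (\<Sum>\<^sub>\<infinity>j. norm (q j) * N s lam (pw a (p j)))"
  proof -
    have "infsum h UNIV = (\<Sum>\<^sub>\<infinity>j. \<Sum>\<^sub>\<infinity>n. D j n)"
      unfolding h_def by (rule infsum_swap_banach[symmetric]) (use DS in simp)
    also have "\<dots> = (\<Sum>\<^sub>\<infinity>j. norm (q j) * N s lam (pw a (p j)))"
      by (rule infsum_cong) (rule infsumI[OF Dj])
    finally show ?thesis .
  qed
  have W1: "W s lam n \<ge> 1" for n using W_ge1[OF s l] .
  have nb: "norm (q j * pw a (p j) n) \<le> D j n" for j n
  proof -
    have "norm (q j * pw a (p j) n) = norm (q j) * (1 * norm (pw a (p j) n))" by (simp add: norm_mult)
    also have "\<dots> \<le> D j n" unfolding D_def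
      using W1[of n] by (intro mult_left_mono mult_right_mono) auto
    finally show ?thesis .
  qed
  have einner: "(\<lambda>j. norm (q j * pw a (p j) n)) summable_on UNIV" for n
    by (rule Infinite_Sum.abs_summable_on_comparison_test'[OF Dinner[of n] nb])
  have pt: "W s lam n * norm (e n) \<le> h n" for n
  proof -
    have "norm (e n) \<le> (\<Sum>\<^sub>\<infinity>j. norm (q j * pw a (p j) n))"
      unfolding e_def by (rule norm_infsum_bound) (rule einner)
    then have "W s lam n * norm (e n) \<le> W s lam n * (\<Sum>\<^sub>\<infinity>j. norm (q j * pw a (p j) n))"
      by (simp add: W_pos less_imp_le mult_left_mono)
    also have "\<dots> = (\<Sum>\<^sub>\<infinity>j. W s lam n * norm (q j * pw a (p j) n))"
      by (simp add: infsum_cmult_right')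
    also have "\<dots> = h n" unfolding h_def D_def by (simp add: norm_mult mult_ac)
    finally show ?thesis .
  qed
  show es: "(\<lambda>n. W s lam n * norm (e n)) summable_on UNIV"
    by (rule summable_on_comparison_test[OF hs pt]) (simp add: W_pos less_imp_le)
  have "N s lam e \<le> infsum h UNIV"
    unfolding N_def by (rule infsum_mono[OF es hs pt])
  then show "N s lam e \<le> (\<Sum>\<^sub>\<infinity>j. norm (q j) * N s lam (pw a (p j)))" using hsum by simp
  fix x
  define G where "G = (\<lambda>n j. q j * pw a (p j) n * exp (\<i> * of_int n * of_real x))"
  have Gb: "norm (G n j) \<le> D j n" for n j
    using nb[of j n] by (simp add: G_def norm_mult)
  have GS: "(\<lambda>(n,j). G n j) summable_on UNIV \<times> UNIV"
  proof -
    have "(\<lambda>z. norm ((\<lambda>(n,j). G n j) z)) summable_on UNIV \<times> UNIV"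
      by (rule Infinite_Sum.abs_summable_on_comparison_test'[OF DS']) (use Gb in auto)
    then show ?thesis by (rule Infinite_Sum.abs_summable_summable)
  qed
  have pwn: "(\<lambda>n. norm (pw a k n)) summable_on UNIV" for k
    using W_norm_summable[OF s l, of "pw a k"] PP by blast
  have "ts e x = (\<Sum>\<^sub>\<infinity>n. \<Sum>\<^sub>\<infinity>j. G n j)"
    unfolding ts_def e_def G_def by (simp add: infsum_cmult_left')
  also have "\<dots> = (\<Sum>\<^sub>\<infinity>j. \<Sum>\<^sub>\<infinity>n. G n j)"
    by (rule infsum_swap_banach[OF GS])
  also have "\<dots> = (\<Sum>\<^sub>\<infinity>j. q j * ts (pw a (p j)) x)"
    unfolding G_def ts_def by (simp add: infsum_cmult_right' mult.assoc)
  also have "\<dots> = (\<Sum>\<^sub>\<infinity>j. q j * ts a x ^ Suc (p j))"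
    using PP by simp
  finally show "ts e x = (\<Sum>\<^sub>\<infinity>j. q j * ts a x ^ Suc (p j))" .
qed



lemma prod_bound: "\<bar>\<Prod>i = 0..<k. (-3/2 :: real) - of_nat i\<bar> \<le> fact (Suc k)"
proof (induction k)
  case 0
  then show ?case by simp
next
  case (Suc k)
  have "\<bar>\<Prod>i = 0..<Suc k. (-3/2 :: real) - of_nat i\<bar> = \<bar>\<Prod>i = 0..<k. (-3/2 :: real) - of_nat i\<bar> * (of_nat k + 3/2)"
    by (simp add: abs_mult)
  also have "\<dots> \<le> fact (Suc k) * (of_nat k + 2)"
    by (rule mult_mono[OF Suc.IH]) auto
  also have "\<dots> = fact (Suc (Suc k))" by (simp add: algebra_simps)
  finally show ?case .
qed

lemma gchoose_bound: "\<bar>(-3/2 :: real) gchoose k\<bar> \<le> real k + 1"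
proof -
  have "\<bar>(-3/2 :: real) gchoose k\<bar> * fact k = \<bar>\<Prod>i = 0..<k. (-3/2 :: real) - of_nat i\<bar>"
    by (metis gbinomial_mult_fact' abs_mult abs_of_nonneg fact_ge_zero)
  also have "\<dots> \<le> fact (Suc k)" by (rule prod_bound)
  also have "\<dots> = (real k + 1) * fact k" by simp
  finally show ?thesis by (simp add: mult_le_cancel_right fact_gt_zero)
qed

lemma four_pow: "real (j + 2) * (2 * real j + 2) \<le> 4 ^ (j + 1)"
proof (induction j)
  case 0
  then show ?case by simp
next
  case (Suc j)
  have "real (Suc j + 2) * (2 * real (Suc j) + 2) \<le> 4 * (real (j + 2) * (2 * real j + 2))"
    by (simp add: algebra_simps)
  also have "\<dots> \<le> 4 * 4 ^ (j + 1)" using Suc.IH by simp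
  finally show ?case by simp
qed

lemma final_arith:
  fixes A0 As r N1 Ns1 \<epsilon> \<mu> K Q :: real
  assumes A0: "0 \<le> A0" "A0 \<le> r * N1" and As: "0 \<le> As" "As \<le> r * Ns1"
    and r: "r = \<epsilon> * sqrt \<mu>" and mu: "0 < \<mu>" "\<mu> < 1" and eps: "0 < \<epsilon>"
    and K: "K \<ge> 1" and v: "K * \<epsilon> * N1 \<le> 1/9" and N1: "N1 \<ge> 0"
    and Q: "0 \<le> Q" "Q \<le> real j + 2"
  shows "Q * (real (Suc (2*j+1)) * K ^ (2*j+1) * A0 ^ (2*j+1) * As) \<le> (1/2) ^ Suc j * (\<epsilon> * \<mu> * Ns1)"
proof -
  define m where "m = 2*j+1"
  have sm: "sqrt \<mu> \<ge> 0" "sqrt \<mu> \<le> 1" using mu by auto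
  have rn: "r \<ge> 0" using r eps sm by simp
  have "K ^ m * A0 ^ m \<le> K ^ m * (r * N1) ^ m"
    using A0 K by (intro mult_left_mono power_mono) auto
  also have "\<dots> = (K * \<epsilon> * N1) ^ m * sqrt \<mu> ^ m" by (simp add: r power_mult_distrib mult_ac)
  also have "\<dots> \<le> (1/9) ^ m * sqrt \<mu> ^ m"
    using v K eps N1 sm by (intro mult_right_mono power_mono) auto
  finally have h1: "K ^ m * A0 ^ m \<le> (1/9) ^ m * sqrt \<mu> ^ m" .
  have h2: "K ^ m * A0 ^ m * As \<le> (1/9) ^ m * sqrt \<mu> ^ m * (r * Ns1)"
    by (rule mult_mono[OF h1 As(2)]) (use sm As in auto)
  have "sqrt \<mu> ^ m * (r * Ns1) = sqrt \<mu> ^ (2 * (j+1)) * \<epsilon> * Ns1"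
    by (simp add: r m_def mult_ac)
  also have "\<dots> = \<mu> ^ (j+1) * \<epsilon> * Ns1"
    using mu by (simp add: power_mult)
  finally have h3: "sqrt \<mu> ^ m * (r * Ns1) = \<mu> ^ (j+1) * \<epsilon> * Ns1" .
  have Ns1: "Ns1 \<ge> 0"
  proof -
    have "0 \<le> r * Ns1" using As by linarith
    moreover have "r > 0" using r eps mu by simp
    ultimately show ?thesis by (simp add: zero_le_mult_iff)
  qed
  have h4: "\<mu> ^ (j+1) \<le> \<mu>"
    using mu by (simp add: power_le_one mult_left_le_one_le)
  have h5: "K ^ m * A0 ^ m * As \<le> (1/9) ^ m * (\<mu> * \<epsilon> * Ns1)"
  proof -
    have "K ^ m * A0 ^ m * As \<le> (1/9) ^ m * (\<mu> ^ (j+1) * \<epsilon> * Ns1)"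
      using h2 h3 by (simp add: mult.assoc)
    also have "\<dots> \<le> (1/9) ^ m * (\<mu> * \<epsilon> * Ns1)"
      using h4 eps Ns1 by (intro mult_left_mono mult_right_mono) auto
    finally show ?thesis .
  qed
  have h6: "Q * real (Suc m) \<le> 4 ^ (j+1)"
  proof -
    have "Q * real (Suc m) \<le> (real j + 2) * real (Suc m)" using Q by (intro mult_right_mono) auto
    also have "\<dots> = real (j + 2) * (2 * real j + 2)" by (simp add: m_def algebra_simps)
    also have "\<dots> \<le> 4 ^ (j+1)" by (rule four_pow)
    finally show ?thesis .
  qed
  have h7: "(4::real) ^ (j+1) * (1/9) ^ m \<le> (1/2) ^ Suc j"
  proof -
    have "(4::real) ^ (j+1) * (1/9) ^ m = (4/9) * (4/81) ^ j"
      by (simp add: m_def power_add power_mult power_divide)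
    also have "\<dots> \<le> (1/2) * (1/2) ^ j"
      by (intro mult_mono power_mono) auto
    finally show ?thesis by simp
  qed
  have "Q * (real (Suc m) * K ^ m * A0 ^ m * As) = (Q * real (Suc m)) * (K ^ m * A0 ^ m * As)"
    by (simp add: mult_ac)
  also have "\<dots> \<le> 4 ^ (j+1) * ((1/9) ^ m * (\<mu> * \<epsilon> * Ns1))"
    by (rule mult_mono[OF h6 h5]) (use K A0 As in auto)
  also have "\<dots> = (4 ^ (j+1) * (1/9) ^ m) * (\<epsilon> * \<mu> * Ns1)" by (simp add: mult_ac)
  also have "\<dots> \<le> (1/2) ^ Suc j * (\<epsilon> * \<mu> * Ns1)"
    using h7 eps mu Ns1 by (intro mult_right_mono) auto
  finally show ?thesis by (simp add: m_def)
qed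

lemma K_bound:
  assumes s: "0 \<le> s" and eps: "0 < \<epsilon>" and N1: "N1 \<ge> 0"
    and h: "36 * (K_const s)^2 * \<epsilon> * N1 \<le> 1"
  shows "2 powr s * \<epsilon> * N1 \<le> 1/9"
proof -
  have x: "\<epsilon> * N1 \<ge> 0" using eps N1 by simp
  consider "s = 0" | "0 < s" "s \<le> 1" | "s > 1" using s by linarith
  then show ?thesis
  proof cases
    case 1
    then have kc: "K_const s = 1/2" by (simp add: K_const_def powr_minus_divide)
    from h have "36 * (1/2)^2 * \<epsilon> * N1 \<le> 1" by (simp only: kc)
    moreover have "36 * (1/2::real)^2 * \<epsilon> * N1 = 9 * (\<epsilon> * N1)" by (simp add: power2_eq_square)
    ultimately show ?thesis using 1 by simp
  next
    case 2
    then have "K_const s = 1" by (simp add: K_const_def)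
    then have "\<epsilon> * N1 \<le> 1/36" using h by simp
    moreover have "2 powr s \<le> 2" using 2 powr_mono[of s 1 2] by simp
    ultimately have "2 powr s * (\<epsilon> * N1) \<le> 2 * (1/36)" using x by (intro mult_mono) auto
    then show ?thesis by (simp add: mult.assoc)
  next
    case 3
    define K where "K = (2::real) powr s"
    have K1: "K \<ge> 1" using 3 by (simp add: K_def ge_one_powr_ge_zero)
    have kc: "K_const s = K / 2" using 3 by (simp add: K_const_def K_def powr_diff)
    from h have "36 * (K/2)^2 * \<epsilon> * N1 \<le> 1" by (simp only: kc)
    moreover have "36 * (K/2)^2 * \<epsilon> * N1 = 9 * K * (K * (\<epsilon> * N1))"
      by (simp add: power2_eq_square algebra_simps)
    ultimately have "9 * K * (K * (\<epsilon> * N1)) \<le> 1" by simp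
    moreover have "9 * (K * (\<epsilon> * N1)) \<le> 9 * K * (K * (\<epsilon> * N1))"
      by (rule mult_right_mono) (use K1 x in auto)
    ultimately have "9 * (K * (\<epsilon> * N1)) \<le> 1" by linarith
    then have "K * \<epsilon> * N1 \<le> 1/9" by (simp add: mult.assoc)
    then show ?thesis by (simp add: K_def)
  qed
qed



lemma W_mono_exp: assumes "t \<le> u" shows "W t lam n \<le> W u lam n"
  unfolding W_def by (rule mult_right_mono) (use assms in \<open>auto intro!: powr_mono\<close>)

lemma W_Suc: "W (t + 1) lam n = (1 + \<bar>real_of_int n\<bar>) * W t lam n"
  unfolding W_def by (simp add: powr_add mult_ac)

lemma deriv_coeffs:
  fixes c :: "int \<Rightarrow> complex"
  assumes Sc: "(\<lambda>n. W (s+1) lam n * norm (c n)) summable_on UNIV" and t: "t \<le> s"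
  shows "(\<lambda>n. W (t+1) lam n * norm (c n)) summable_on UNIV"
    and "(\<lambda>n. W t lam n * norm (\<i> * of_int n * c n)) summable_on UNIV"
    and "N t lam (\<lambda>n. \<i> * of_int n * c n) \<le> N (t+1) lam c"
proof -
  show S1: "(\<lambda>n. W (t+1) lam n * norm (c n)) summable_on UNIV"
    by (rule summable_on_comparison_test[OF Sc])
       (use t in \<open>auto intro!: mult_right_mono W_mono_exp simp: W_pos less_imp_le\<close>)
  have pt: "W t lam n * norm (\<i> * of_int n * c n) \<le> W (t+1) lam n * norm (c n)" for n
  proof -
    have "W t lam n * norm (\<i> * of_int n * c n) = (\<bar>real_of_int n\<bar> * W t lam n) * norm (c n)"
      by (simp add: norm_mult)
    also have "\<dots> \<le> ((1 + \<bar>real_of_int n\<bar>) * W t lam n) * norm (c n)"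
      by (intro mult_right_mono) (auto simp: W_pos less_imp_le)
    finally show ?thesis by (simp add: W_Suc)
  qed
  show S2: "(\<lambda>n. W t lam n * norm (\<i> * of_int n * c n)) summable_on UNIV"
    by (rule summable_on_comparison_test[OF S1 pt]) (simp add: W_pos less_imp_le)
  show "N t lam (\<lambda>n. \<i> * of_int n * c n) \<le> N (t+1) lam c"
    unfolding N_def by (rule infsum_mono[OF S2 S1 pt])
qed

lemma reflect_sum:
  fixes f :: "int \<Rightarrow> real"
  shows "(\<lambda>n. f (- n)) summable_on UNIV \<longleftrightarrow> f summable_on UNIV"
    and "(\<Sum>\<^sub>\<infinity>n. f (- n)) = infsum f UNIV"
proof -
  have bij: "bij_betw uminus (UNIV::int set) UNIV"
    by (rule bij_betwI[where g=uminus]) auto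
  show "(\<lambda>n. f (- n)) summable_on UNIV \<longleftrightarrow> f summable_on UNIV"
    by (rule summable_on_reindex_bij_betw[OF bij])
  show "(\<Sum>\<^sub>\<infinity>n. f (- n)) = infsum f UNIV"
    by (rule infsum_reindex_bij_betw[OF bij])
qed

lemma sym_coeffs:
  fixes d :: "int \<Rightarrow> complex"
  assumes Sd: "(\<lambda>n. W t lam n * norm (d n)) summable_on UNIV"
  shows "(\<lambda>n. W t lam n * norm ((d n + cnj (d (- n))) / 2)) summable_on UNIV"
    and "N t lam (\<lambda>n. (d n + cnj (d (- n))) / 2) \<le> N t lam d"
proof -
  have Sd': "(\<lambda>n. W t lam n * norm (d (- n))) summable_on UNIV"
    using reflect_sum(1)[of "\<lambda>n. W t lam n * norm (d n)"] Sd by (simp add: W_minus)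
  have Ssum: "(\<lambda>n. (1/2) * (W t lam n * norm (d n) + W t lam n * norm (d (- n)))) summable_on UNIV"
    by (rule summable_on_cmult_right[OF summable_on_add[OF Sd Sd']])
  have pt: "W t lam n * norm ((d n + cnj (d (- n))) / 2) \<le> (1/2) * (W t lam n * norm (d n) + W t lam n * norm (d (- n)))" for n
  proof -
    have "norm ((d n + cnj (d (- n))) / 2) \<le> (norm (d n) + norm (d (- n))) / 2"
      using norm_triangle_ineq[of "d n" "cnj (d (- n))"] by (simp add: norm_divide)
    then have "W t lam n * norm ((d n + cnj (d (- n))) / 2) \<le> W t lam n * ((norm (d n) + norm (d (- n))) / 2)"
      using W_pos[of t lam n] by (intro mult_left_mono) auto
    then show ?thesis by (simp add: algebra_simps)
  qed
  show S: "(\<lambda>n. W t lam n * norm ((d n + cnj (d (- n))) / 2)) summable_on UNIV"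
    by (rule summable_on_comparison_test[OF Ssum pt]) (simp add: W_pos less_imp_le)
  have "N t lam (\<lambda>n. (d n + cnj (d (- n))) / 2) \<le> (\<Sum>\<^sub>\<infinity>n. (1/2) * (W t lam n * norm (d n) + W t lam n * norm (d (- n))))"
    unfolding N_def by (rule infsum_mono[OF S Ssum pt])
  also have "\<dots> = (1/2) * (\<Sum>\<^sub>\<infinity>n. W t lam n * norm (d n) + W t lam n * norm (d (- n)))"
    by (rule infsum_cmult_right')
  also have "\<dots> = (1/2) * ((\<Sum>\<^sub>\<infinity>n. W t lam n * norm (d n)) + (\<Sum>\<^sub>\<infinity>n. W t lam n * norm (d (- n))))"
    by (simp only: infsum_add[OF Sd Sd'])
  also have "(\<Sum>\<^sub>\<infinity>n. W t lam n * norm (d (- n))) = (\<Sum>\<^sub>\<infinity>n. W t lam n * norm (d n))"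
    using reflect_sum(2)[of "\<lambda>n. W t lam n * norm (d n)"] by (simp add: W_minus)
  finally show "N t lam (\<lambda>n. (d n + cnj (d (- n))) / 2) \<le> N t lam d" by (simp add: N_def)
qed

lemma Re_ts:
  fixes d :: "int \<Rightarrow> complex"
  assumes Sd: "(\<lambda>n. norm (d n)) summable_on UNIV"
  shows "complex_of_real (Re (ts d x)) = ts (\<lambda>n. (d n + cnj (d (- n))) / 2) x"
proof -
  define E where "E = (\<lambda>n. exp (\<i> * of_int n * of_real x))"
  have cE: "cnj (E n) = E (- n)" for n by (simp add: E_def exp_cnj)
  have S1: "(\<lambda>n. d n * E n) summable_on UNIV"
    using Infinite_Sum.abs_summable_summable[OF ts_abs_summable[OF Sd]] by (simp add: E_def)
  have S2': "(\<lambda>n. cnj (d n * E n)) summable_on UNIV" by (rule summable_on_cnj_iff[THEN iffD2, OF S1])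
  have bij: "bij_betw uminus (UNIV::int set) UNIV"
    by (rule bij_betwI[where g=uminus]) auto
  have S2: "(\<lambda>n. cnj (d (- n)) * E n) summable_on UNIV"
    using summable_on_reindex_bij_betw[OF bij, of "\<lambda>n. cnj (d n * E n)"] S2' by (simp add: cE)
  have tsd: "ts d x = (\<Sum>\<^sub>\<infinity>n. d n * E n)" by (simp add: ts_def E_def)
  have "cnj (ts d x) = (\<Sum>\<^sub>\<infinity>n. cnj (d n * E n))"
    unfolding ts_def E_def by (rule infsum_cnj[symmetric])
  also have "\<dots> = (\<Sum>\<^sub>\<infinity>n. cnj (d (- n) * E (- n)))"
    by (rule infsum_reindex_bij_betw[OF bij, symmetric])
  also have "\<dots> = (\<Sum>\<^sub>\<infinity>n. cnj (d (- n)) * E n)"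
    by (simp add: cE)
  finally have cts: "cnj (ts d x) = (\<Sum>\<^sub>\<infinity>n. cnj (d (- n)) * E n)" .
  have "complex_of_real (Re (ts d x)) = (ts d x + cnj (ts d x)) / 2"
    by (simp add: complex_add_cnj)
  also have "\<dots> = ((\<Sum>\<^sub>\<infinity>n. d n * E n) + (\<Sum>\<^sub>\<infinity>n. cnj (d (- n)) * E n)) / 2"
    by (simp only: cts, simp only: tsd)
  also have "\<dots> = (\<Sum>\<^sub>\<infinity>n. (d n * E n + cnj (d (- n)) * E n)) / 2"
    by (simp add: infsum_add[OF S1 S2])
  also have "\<dots> = (\<Sum>\<^sub>\<infinity>n. (d n * E n + cnj (d (- n)) * E n) / 2)"
    by (simp only: divide_inverse infsum_cmult_left')
  also have "\<dots> = ts (\<lambda>n. (d n + cnj (d (- n))) / 2) x"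
    unfolding ts_def E_def by (simp add: algebra_simps add_divide_distrib)
  finally show ?thesis .
qed



lemma ts_norm_le_N:
  assumes s: "s \<ge> 0" and l: "lam \<ge> 0" and S: "(\<lambda>n. W s lam n * norm (f n)) summable_on UNIV"
  shows "norm (ts f x) \<le> N s lam f"
proof -
  have nf: "(\<lambda>n. norm (f n)) summable_on UNIV" by (rule W_norm_summable[OF s l S])
  have "norm (ts f x) \<le> (\<Sum>\<^sub>\<infinity>n. norm (f n * exp (\<i> * of_int n * of_real x)))"
    unfolding ts_def by (rule norm_infsum_bound) (rule ts_abs_summable[OF nf])
  also have "\<dots> = (\<Sum>\<^sub>\<infinity>n. norm (f n))" by (simp add: norm_mult)
  also have "\<dots> \<le> N s lam f" unfolding N_def
    by (rule infsum_mono[OF nf S]) (use W_ge1[OF s l] in \<open>simp add: mult_le_cancel_right1\<close>)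
  finally show ?thesis .
qed

lemma scale_coeffs:
  fixes b :: "int \<Rightarrow> complex" and r :: real
  assumes r: "r \<ge> 0" and S: "(\<lambda>n. W t lam n * norm (b n)) summable_on UNIV"
  shows "(\<lambda>n. W t lam n * norm (complex_of_real r * b n)) summable_on UNIV"
    and "N t lam (\<lambda>n. complex_of_real r * b n) = r * N t lam b"
proof -
  have e: "W t lam n * norm (complex_of_real r * b n) = r * (W t lam n * norm (b n))" for n
    using r by (simp add: norm_mult)
  show "(\<lambda>n. W t lam n * norm (complex_of_real r * b n)) summable_on UNIV"
    unfolding e by (rule summable_on_cmult_right[OF S])
  show "N t lam (\<lambda>n. complex_of_real r * b n) = r * N t lam b"
    unfolding N_def e by (rule infsum_cmult_right')
qed

lemma ts_scale: "ts (\<lambda>n. c * b n) x = c * ts b x"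
  unfolding ts_def by (simp add: mult.assoc infsum_cmult_right')



theorem proposition5p4:
  fixes \<epsilon> \<mu> s lam :: real and \<zeta> :: "real \<Rightarrow> real"
  assumes "0 < \<epsilon>" "\<epsilon> \<le> 1" "0 < \<mu>" "\<mu> < 1" "0 \<le> s" "0 \<le> lam"
    and "in_wiener (s + 1) lam (\<lambda>x. complex_of_real (\<zeta> x))"
    and "36 * (K_const s)^2 * \<epsilon> * wiener_norm 1 lam (\<lambda>x. complex_of_real (\<zeta> x)) \<le> 1"
  shows "in_wiener s lam (\<lambda>x. complex_of_real (F_fun (\<epsilon> * sqrt \<mu> * Re (fourier_deriv (\<lambda>y. complex_of_real (\<zeta> y)) x))))
    \<and> wiener_norm s lam (\<lambda>x. complex_of_real (F_fun (\<epsilon> * sqrt \<mu> * Re (fourier_deriv (\<lambda>y. complex_of_real (\<zeta> y)) x))))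
        \<le> \<epsilon> * \<mu> * wiener_norm (s + 1) lam (\<lambda>x. complex_of_real (\<zeta> x))"
proof -
  note eps = assms(1,2) and mu = assms(3,4) and s = assms(5) and l = assms(6)
  define Z where "Z = (\<lambda>x. complex_of_real (\<zeta> x))"
  define c where "c = fourier_coeff Z"
  define r where "r = \<epsilon> * sqrt \<mu>"
  define d where "d = (\<lambda>n. \<i> * of_int n * c n)"
  define b where "b = (\<lambda>n. (d n + cnj (d (- n))) / 2)"
  define a where "a = (\<lambda>n. complex_of_real r * b n)"
  define K where "K = (2::real) powr s"
  define N1 where "N1 = N 1 lam c"
  define Ns1 where "Ns1 = N (s+1) lam c"
  have rn: "r \<ge> 0" using eps mu by (simp add: r_def)
  have K1: "K \<ge> 1" using s by (simp add: K_def ge_one_powr_ge_zero)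
  have Sc: "(\<lambda>n. W (s+1) lam n * norm (c n)) summable_on UNIV"
    using assms(7) by (simp add: in_wiener_eq c_def Z_def)
  note D0 = deriv_coeffs[OF Sc s] and Ds = deriv_coeffs[OF Sc order_refl]
  have Sd0: "(\<lambda>n. W 0 lam n * norm (d n)) summable_on UNIV" using D0(2) by (simp add: d_def)
  have Nd0: "N 0 lam d \<le> N1" using D0(3) by (simp add: d_def N1_def)
  have Sds: "(\<lambda>n. W s lam n * norm (d n)) summable_on UNIV" using Ds(2) by (simp add: d_def)
  have Nds: "N s lam d \<le> Ns1" using Ds(3) by (simp add: d_def Ns1_def)
  have Sb0: "(\<lambda>n. W 0 lam n * norm (b n)) summable_on UNIV" and Nb0: "N 0 lam b \<le> N 0 lam d"
    using sym_coeffs[OF Sd0] by (simp_all add: b_def)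
  have Sbs: "(\<lambda>n. W s lam n * norm (b n)) summable_on UNIV" and Nbs: "N s lam b \<le> N s lam d"
    using sym_coeffs[OF Sds] by (simp_all add: b_def)
  have Sa0: "(\<lambda>n. W 0 lam n * norm (a n)) summable_on UNIV" and Na0: "N 0 lam a = r * N 0 lam b"
    using scale_coeffs[OF rn Sb0] by (simp_all add: a_def)
  have Sas: "(\<lambda>n. W s lam n * norm (a n)) summable_on UNIV" and Nas: "N s lam a = r * N s lam b"
    using scale_coeffs[OF rn Sbs] by (simp_all add: a_def)
  define A0 where "A0 = N 0 lam a"
  define As where "As = N s lam a"
  have A0b: "0 \<le> A0" "A0 \<le> r * N1"
    using Na0 Nb0 Nd0 rn by (auto simp: A0_def N_nonneg intro!: mult_left_mono)
  have Asb: "0 \<le> As" "As \<le> r * Ns1"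
    using Nas Nbs Nds rn by (auto simp: As_def N_nonneg intro!: mult_left_mono)
  have N1n: "N1 \<ge> 0" by (simp add: N1_def N_nonneg)
  have wn1: "wiener_norm 1 lam Z = N1" by (simp add: wiener_norm_eq N1_def c_def)
  have wns1: "wiener_norm (s+1) lam Z = Ns1" by (simp add: wiener_norm_eq Ns1_def c_def)
  have v: "K * \<epsilon> * N1 \<le> 1/9"
  proof -
    have h8: "36 * (K_const s)^2 * \<epsilon> * N1 \<le> 1"
      using assms(8) wn1 unfolding Z_def by simp
    show ?thesis using K_bound[OF s eps(1) N1n h8] by (simp add: K_def)
  qed
  define g where "g = (\<lambda>j. (-3/2 :: real) gchoose (Suc j))"
  define q where "q = (\<lambda>j. complex_of_real (g j))"
  define p where "p = (\<lambda>j::nat. 2*j+1)"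
  note PP = pw_props[OF s l Sa0 Sas]
  define C where "C = \<epsilon> * \<mu> * Ns1"
  have tb: "norm (q j) * N s lam (pw a (p j)) \<le> (1/2) ^ Suc j * C" for j
  proof -
    have Q: "0 \<le> norm (q j)" "norm (q j) \<le> real j + 2"
      using gchoose_bound[of "Suc j"] by (simp_all add: q_def g_def)
    have "norm (q j) * N s lam (pw a (p j)) \<le> norm (q j) * (real (Suc (2*j+1)) * K ^ (2*j+1) * A0 ^ (2*j+1) * As)"
      using PP[of "p j"] Q(1) by (intro mult_left_mono) (simp_all add: p_def K_def A0_def As_def)
    also have "\<dots> \<le> (1/2) ^ Suc j * C"
      unfolding C_def by (rule final_arith[OF A0b Asb r_def mu eps(1) K1 v N1n Q])
    finally show ?thesis .
  qed
  have geo: "((\<lambda>j. (1/2::real) ^ Suc j * C) has_sum C) UNIV"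
  proof -
    have "((\<lambda>j. (1/2::real) ^ Suc j) has_sum 1) UNIV"
      by (rule norm_summable_imp_has_sum) (use power_half_series sums_summable in auto)
    from has_sum_cmult_left[OF this, where c=C] show ?thesis by simp
  qed
  have qs: "(\<lambda>j. norm (q j) * N s lam (pw a (p j))) summable_on UNIV"
    by (rule summable_on_comparison_test[OF has_sum_imp_summable[OF geo] tb])
       (simp add: N_nonneg)
  have qsum: "(\<Sum>\<^sub>\<infinity>j. norm (q j) * N s lam (pw a (p j))) \<le> C"
    using infsum_mono[OF qs has_sum_imp_summable[OF geo] tb] infsumI[OF geo] by simp
  define e where "e = (\<lambda>n. \<Sum>\<^sub>\<infinity>j. q j * pw a (p j) n)"
  note CS = comp_series[OF s l Sa0 Sas qs, folded e_def]
  define G where "G = (\<lambda>x. complex_of_real (F_fun (\<epsilon> * sqrt \<mu> * Re (fourier_deriv Z x))))"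
  have Gts: "G x = ts e x" for x
  proof -
    have fd: "fourier_deriv Z x = ts d x"
      by (simp add: fourier_deriv_def ts_def d_def c_def)
    have nd: "(\<lambda>n. norm (d n)) summable_on UNIV" by (rule W_norm_summable[OF _ l Sd0]) simp
    define Y where "Y = r * Re (ts d x)"
    have YA: "complex_of_real Y = ts a x"
    proof -
      have "ts a x = complex_of_real r * ts b x" unfolding a_def by (rule ts_scale)
      moreover have "complex_of_real (Re (ts d x)) = ts b x"
        using Re_ts[OF nd, of x] by (simp add: b_def)
      ultimately show ?thesis by (simp add: Y_def)
    qed
    have Yb: "\<bar>Y\<bar> \<le> 1/9"
    proof -
      have "\<bar>Y\<bar> = norm (ts a x)" using YA by (metis norm_of_real)
      also have "\<dots> \<le> A0" unfolding A0_def by (rule ts_norm_le_N[OF _ l Sa0]) simp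
      also have "\<dots> \<le> r * N1" by (rule A0b(2))
      also have "\<dots> \<le> K * \<epsilon> * N1"
      proof -
        have "r \<le> \<epsilon>" using eps mu by (simp add: r_def mult_left_le)
        also have "\<epsilon> \<le> K * \<epsilon>" using K1 eps by simp
        finally show ?thesis using N1n by (intro mult_right_mono) auto
      qed
      also have "\<dots> \<le> 1/9" by (rule v)
      finally show ?thesis .
    qed
    have Y2: "\<bar>Y^2\<bar> < 1"
    proof -
      have "\<bar>Y\<bar>^2 \<le> (1/9)^2" by (rule power_mono[OF Yb]) simp
      moreover have "(1/9::real)^2 < 1" by (simp add: power2_eq_square)
      ultimately show ?thesis by (simp add: power_abs)
    qed
    define t where "t = (\<lambda>j. g j * (Y^2) ^ Suc j)"
    have ser: "t sums F_fun Y"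
    proof -
      have "(\<lambda>n. ((-3/2::real) gchoose n) * (Y^2)^n) sums (1 + Y^2) powr (-3/2)"
        by (rule gen_binomial_real[OF Y2])
      then have "t sums ((1 + Y^2) powr (-3/2) - 1)"
        unfolding t_def g_def using sums_Suc_iff[of "\<lambda>n. ((-3/2::real) gchoose n) * (Y^2)^n"] by simp
      moreover have "(1 + Y^2) powr (-3/2) - 1 = F_fun Y"
        by (simp add: F_fun_def powr_minus_divide)
      ultimately show ?thesis by simp
    qed
    have tq: "complex_of_real (t j) = q j * ts a x ^ Suc (p j)" for j
    proof -
      have "complex_of_real (t j) = q j * (complex_of_real Y) ^ (2 * Suc j)"
        by (simp add: t_def q_def power_mult power2_eq_square)
      then show ?thesis by (simp add: YA p_def)
    qed
    have tn: "norm (t j) \<le> norm (q j) * N s lam (pw a (p j))" for j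
    proof -
      have "norm (t j) = norm (complex_of_real (t j))" by (simp only: norm_of_real real_norm_def)
      also have "\<dots> = norm (q j * ts a x ^ Suc (p j))" by (simp only: tq)
      also have "\<dots> = norm (q j) * norm (ts a x ^ Suc (p j))" by (rule norm_mult)
      also have "ts a x ^ Suc (p j) = ts (pw a (p j)) x" using PP[of "p j"] by simp
      also have "norm (ts (pw a (p j)) x) \<le> N s lam (pw a (p j))"
        by (rule ts_norm_le_N[OF s l]) (use PP in blast)
      then have "norm (q j) * norm (ts (pw a (p j)) x) \<le> norm (q j) * N s lam (pw a (p j))"
        by (rule mult_left_mono) simp
      finally show ?thesis .
    qed
    have tsu: "(\<lambda>j. norm (t j)) summable_on UNIV"
      by (rule summable_on_comparison_test[OF qs tn]) simp
    have "summable (\<lambda>j. norm (t j))"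
      using summable_on_UNIV_nonneg_real_iff[of "\<lambda>j. norm (t j)"] tsu by simp
    then have "(t has_sum F_fun Y) UNIV"
      by (rule norm_summable_imp_has_sum[OF _ ser])
    then have "((\<lambda>j. complex_of_real (t j)) has_sum complex_of_real (F_fun Y)) UNIV"
      by (rule has_sum_of_real)
    then have "complex_of_real (F_fun Y) = (\<Sum>\<^sub>\<infinity>j. q j * ts a x ^ Suc (p j))"
      by (simp add: tq infsumI)
    also have "\<dots> = ts e x" using CS(3)[of x] by simp
    finally show ?thesis by (simp add: G_def fd Y_def r_def)
  qed
  have Gts': "G = ts e" by (rule ext) (rule Gts)
  have eS: "(\<lambda>n. W s lam n * norm (e n)) summable_on UNIV"
    using CS(1) by (simp add: e_def)
  have ne: "(\<lambda>n. norm (e n)) summable_on UNIV" by (rule W_norm_summable[OF s l eS])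
  have fc: "fourier_coeff G = e"
    by (rule ext) (rule ts_coeff[OF ne], simp add: Gts)
  have ai: "G absolutely_integrable_on {0..2*pi}"
    unfolding Gts' by (rule absolutely_integrable_continuous_real)
       (rule continuous_on_subset[OF ts_cont[OF ne]], simp)
  have inw: "in_wiener s lam G"
    unfolding in_wiener_eq fc using ai eS by simp
  have wn: "wiener_norm s lam G \<le> \<epsilon> * \<mu> * wiener_norm (s + 1) lam Z"
    using CS(2) qsum wns1 by (simp add: C_def wiener_norm_eq fc)
  show ?thesis using inw wn by (simp add: G_def Z_def)
qed

end
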